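(* Let $k\ge 2$, $\tau=1000k$, $\rho=1-\frac{1}{10\tau}$, and let $g:\{0,1\}^n\to\{0,1\}$ be a $k$-term DNF. If $y^0\in\{0,1\}^n$ satisfies $g_{\le 1000\tau\log k}(y^0)=0$, then $T_\rho g(y^0)\le 0.1$.
   Context: $g_{\le L}$ is the sub-DNF of $g$ consisting of terms with at most $L$ literals. For $x\in\{0,1\}^n$, $\mathbf{y}\sim N_\rho(x)$ means each bit independently has $\mathbf{y}_i=x_i$ with probability $\rho$ and $\mathbf{y}_i=1-x_i$ with probability $1-\rho$. The noise operator is $T_\rho g(x)=\mathbb{E}_{\mathbf{y}\sim N_\rho(x)}[g(\mathbf{y})]$. *)

theory Defs
  imports Complex_Main
begin

(* A literal (i, b) asserts x_i = b.  A term is a finite set of literals,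
   a DNF is a finite set of terms; it evaluates to 1 iff some term is satisfied. *)
type_synonym lit = "nat \<times> bool"

definition term_sat :: "lit set \<Rightarrow> (nat \<Rightarrow> bool) \<Rightarrow> bool" where
  "term_sat t x \<longleftrightarrow> (\<forall>(i, b) \<in> t. x i = b)"

definition dnf_eval :: "lit set set \<Rightarrow> (nat \<Rightarrow> bool) \<Rightarrow> real" where
  "dnf_eval F x = (if \<exists>t \<in> F. term_sat t x then 1 else 0)"

definition is_k_term_dnf :: "nat \<Rightarrow> nat \<Rightarrow> lit set set \<Rightarrow> bool" where
  "is_k_term_dnf n k F \<longleftrightarrow> finite F \<and> card F \<le> k \<and>
     (\<forall>t \<in> F. finite t \<and> (\<forall>(i, b) \<in> t. i < n))"

definition sub_dnf :: "lit set set \<Rightarrow> real \<Rightarrow> lit set set" where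
  "sub_dnf F L = {t \<in> F. real (card t) \<le> L}"

definition flip :: "(nat \<Rightarrow> bool) \<Rightarrow> nat set \<Rightarrow> (nat \<Rightarrow> bool)" where
  "flip x S = (\<lambda>i. if i \<in> S then \<not> x i else x i)"

(* T_rho g(x) = E_{y ~ N_rho(x)} g(y) on {0,1}^n: each bit is flipped
   independently with probability 1 - rho; S is the set of flipped bits. *)
definition noise_op :: "nat \<Rightarrow> real \<Rightarrow> ((nat \<Rightarrow> bool) \<Rightarrow> real) \<Rightarrow> (nat \<Rightarrow> bool) \<Rightarrow> real" where
  "noise_op n \<rho> g x =
     (\<Sum>S \<in> Pow {..<n}. (1 - \<rho>) ^ card S * \<rho> ^ (n - card S) * g (flip x S))"

end

theory Submission
  imports Defs
begin

definition EE :: "nat \<Rightarrow> real \<Rightarrow> (nat set \<Rightarrow> real) \<Rightarrow> real" where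
  "EE n \<rho> f = (\<Sum>S \<in> Pow {..<n}. (1 - \<rho>) ^ card S * \<rho> ^ (n - card S) * f S)"

lemma EE_Suc: "EE (Suc n) \<rho> f = \<rho> * EE n \<rho> f + (1-\<rho>) * EE n \<rho> (\<lambda>S. f (insert n S))"
proof -
  have disj: "Pow {..<n} \<inter> insert n ` Pow {..<n} = {}" by auto
  have inj: "inj_on (insert n) (Pow {..<n})"
    by (rule inj_onI) (metis Diff_insert_absorb PowD lessThan_iff less_irrefl subsetD)
  have c: "S \<in> Pow {..<n} \<Longrightarrow> card (insert n S) = Suc (card S) \<and> card S \<le> n" for S
    by (auto simp: finite_subset card_insert_if dest: card_mono[of "{..<n}", simplified])
  have "EE (Suc n) \<rho> f = (\<Sum>S \<in> Pow {..<n}. (1 - \<rho>) ^ card S * \<rho> ^ (Suc n - card S) * f S)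
     + (\<Sum>S \<in> insert n ` Pow {..<n}. (1 - \<rho>) ^ card S * \<rho> ^ (Suc n - card S) * f S)"
    unfolding EE_def lessThan_Suc Pow_insert by (rule sum.union_disjoint) (auto simp: disj)
  also have "(\<Sum>S \<in> insert n ` Pow {..<n}. (1 - \<rho>) ^ card S * \<rho> ^ (Suc n - card S) * f S)
     = (\<Sum>S \<in> Pow {..<n}. (1 - \<rho>) ^ card (insert n S) * \<rho> ^ (Suc n - card (insert n S)) * f (insert n S))"
    by (rule sum.reindex[OF inj, unfolded comp_def])
  also have "\<dots> = (1-\<rho>) * EE n \<rho> (\<lambda>S. f (insert n S))"
    unfolding EE_def sum_distrib_left by (rule sum.cong) (auto simp: c)
  also have "(\<Sum>S \<in> Pow {..<n}. (1 - \<rho>) ^ card S * \<rho> ^ (Suc n - card S) * f S) = \<rho> * EE n \<rho> f"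
    unfolding EE_def sum_distrib_left by (rule sum.cong) (auto simp: c Suc_diff_le)
  finally show ?thesis .
qed

lemma EE_cong: "(\<And>S. S \<subseteq> {..<n} \<Longrightarrow> f S = g S) \<Longrightarrow> EE n \<rho> f = EE n \<rho> g"
  unfolding EE_def by (intro sum.cong) auto

lemma EE_cmult: "EE n \<rho> (\<lambda>S. c * f S) = c * EE n \<rho> f"
  unfolding EE_def by (simp add: sum_distrib_left mult_ac)

lemma EE_mono: "0 \<le> \<rho> \<Longrightarrow> \<rho> \<le> 1 \<Longrightarrow> (\<And>S. S \<subseteq> {..<n} \<Longrightarrow> f S \<le> g S) \<Longrightarrow> EE n \<rho> f \<le> EE n \<rho> g"
  unfolding EE_def by (intro sum_mono mult_left_mono) auto

lemma EE_sum: "EE n \<rho> (\<lambda>S. \<Sum>t\<in>F. h t S) = (\<Sum>t\<in>F. EE n \<rho> (h t))"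
  unfolding EE_def by (simp add: sum_distrib_left sum.swap[of _ F])

lemma EE_prod: "EE n \<rho> (\<lambda>S. if \<forall>i<n. ok i (i \<in> S) then 1 else 0)
   = (\<Prod>i<n. (1-\<rho>) * (if ok i True then 1 else 0) + \<rho> * (if ok i False then 1 else 0))"
proof (induction n)
  case 0
  then show ?case by (simp add: EE_def)
next
  case (Suc n)
  have "EE (Suc n) \<rho> (\<lambda>S. if \<forall>i<Suc n. ok i (i \<in> S) then 1 else 0)
    = \<rho> * EE n \<rho> (\<lambda>S. (if ok n False then 1 else 0) * (if \<forall>i<n. ok i (i \<in> S) then 1 else 0))
    + (1-\<rho>) * EE n \<rho> (\<lambda>S. (if ok n True then 1 else 0) * (if \<forall>i<n. ok i (i \<in> S) then 1 else 0))"
    unfolding EE_Suc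
  proof (intro arg_cong2[where f="(+)"] arg_cong2[where f="(*)"] refl EE_cong)
    fix S assume "S \<subseteq> {..<n}"
    then have "n \<notin> S" by auto
    then show "(if \<forall>i<Suc n. ok i (i \<in> S) then 1 else 0) = (if ok n False then 1 else 0) * (if \<forall>i<n. ok i (i \<in> S) then 1 else (0::real))"
      by (auto simp: less_Suc_eq)
    show "(if \<forall>i<Suc n. ok i (i \<in> insert n S) then 1 else 0) = (if ok n True then 1 else 0) * (if \<forall>i<n. ok i (i \<in> S) then 1 else (0::real))"
      by (auto simp: less_Suc_eq)
  qed
  also have "\<dots> = (\<Prod>i<Suc n. (1-\<rho>) * (if ok i True then 1 else 0) + \<rho> * (if ok i False then 1 else 0))"
    unfolding EE_cmult Suc by (simp add: algebra_simps)
  finally show ?case .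
qed

lemma prod_one_factor:
  fixes f :: "nat \<Rightarrow> real"
  assumes "\<And>i. i < n \<Longrightarrow> 0 \<le> f i \<and> f i \<le> 1" "j < n"
  shows "(\<Prod>i<n. f i) \<le> f j"
proof -
  have "(\<Prod>i<n. f i) = f j * (\<Prod>i\<in>{..<n}-{j}. f i)"
    using assms(2) by (simp add: prod.remove)
  also have "\<dots> \<le> f j * 1"
    using assms by (intro mult_left_mono prod_le_1) auto
  finally show ?thesis by simp
qed

lemma prod_many_factors:
  fixes f :: "nat \<Rightarrow> real"
  assumes "\<And>i. i < n \<Longrightarrow> 0 \<le> f i \<and> f i \<le> 1" "V \<subseteq> {..<n}" "\<And>i. i \<in> V \<Longrightarrow> f i \<le> q"
  shows "(\<Prod>i<n. f i) \<le> q ^ card V"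
proof -
  have "(\<Prod>i<n. f i) \<le> (\<Prod>i<n. if i \<in> V then q else 1)"
    using assms by (intro prod_mono) auto
  also have "\<dots> = q ^ card V"
    using assms(2) by (simp add: prod.If_cases Int_absorb1)
  finally show ?thesis .
qed

lemma numeric:
  fixes k :: nat and m :: nat
  assumes "k \<ge> 2" "real m \<ge> 500000 * real k * log 2 (real k)"
  shows "(1 - 1 / (10000 * real k)) ^ m \<le> 1 / (20 * real k)"
proof -
  define p where "p = 1 / (10000 * real k)"
  have kp: "real k > 0" using assms by simp
  have "1 - p \<le> exp (- p)" using exp_ge_add_one_self[of "-p"] by simp
  moreover have "0 \<le> 1 - p" using assms by (simp add: p_def field_simps)
  ultimately have "(1-p)^m \<le> exp (-p) ^ m" by (intro power_mono)
  also have "\<dots> = exp (- (p * m))" by (simp add: exp_of_nat_mult[symmetric] mult_ac)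
  also have "\<dots> \<le> exp (- (50 * ln (real k)))"
  proof -
    have "ln (real k) \<le> log 2 (real k)"
    proof -
      have "ln 2 \<le> (1::real)" using ln_le_minus_one[of 2] by simp
      moreover have "ln (real k) \<ge> 0" using assms by simp
      moreover have "ln (2::real) > 0" by simp
      ultimately show ?thesis unfolding log_def by (simp add: le_divide_eq mult_left_le)
    qed
    moreover have "p * m \<ge> p * (500000 * real k * log 2 (real k))"
      using assms by (intro mult_left_mono) (auto simp: p_def)
    moreover have "p * (500000 * real k * log 2 (real k)) = 50 * log 2 (real k)"
      using kp by (simp add: p_def field_simps)
    ultimately show ?thesis by simp
  qed
  also have "\<dots> = 1 / real k ^ 50"
  proof -
    have "exp (50 * ln (real k)) = exp (ln (real k)) ^ 50"
      using exp_of_nat_mult[of 50 "ln (real k)"] by simp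
    then show ?thesis using kp by (simp add: exp_minus divide_inverse)
  qed
  also have "\<dots> \<le> 1 / (20 * real k)"
  proof -
    have "(2::real) ^ 49 \<le> real k ^ 49" using assms by (intro power_mono) auto
    then have "20 \<le> real k ^ 49" by simp
    then have "20 * real k \<le> real k ^ 49 * real k" using kp by simp
    then have "20 * real k \<le> real k ^ 50" by (simp add: power_Suc2[symmetric])
    then show ?thesis using kp by (intro divide_left_mono) auto
  qed
  finally show ?thesis by (simp add: p_def)
qed

theorem claim6p5:
  fixes n k :: nat and F :: "lit set set" and y0 :: "nat \<Rightarrow> bool"
  assumes "k \<ge> 2"
    and "is_k_term_dnf n k F"
    and "dnf_eval (sub_dnf F (1000 * (1000 * real k) * log 2 (real k))) y0 = 0"
  shows "noise_op n (1 - 1 / (10 * (1000 * real k))) (dnf_eval F) y0 \<le> 0.1"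
proof -
  define \<rho> where "\<rho> = 1 - 1 / (10 * (1000 * real k))"
  define L where "L = 1000 * (1000 * real k) * log 2 (real k)"
  have kp: "real k > 0" using assms by simp
  have r0: "0 \<le> \<rho>" and r1: "\<rho> \<le> 1" using assms by (auto simp: \<rho>_def field_simps)
  have p: "1 - \<rho> = 1 / (10000 * real k)" by (simp add: \<rho>_def)
  have pr: "1 - \<rho> \<le> \<rho>" using assms by (simp add: \<rho>_def field_simps)
  have finF: "finite F" and cardF: "card F \<le> k"
    and tF: "\<And>t. t \<in> F \<Longrightarrow> finite t \<and> (\<forall>(i, b) \<in> t. i < n)"
    using assms(2) unfolding is_k_term_dnf_def by auto
  define ok where "ok t i s = (\<forall>b. (i, b) \<in> t \<longrightarrow> (if s then \<not> y0 i else y0 i) = b)" for t i s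
  define fac where "fac t i = (1-\<rho>) * (if ok t i True then 1 else 0) + \<rho> * (if ok t i False then 1 else (0::real))" for t i
  have fac01: "0 \<le> fac t i \<and> fac t i \<le> 1" for t i
    using r0 r1 by (auto simp: fac_def)
  have noise: "noise_op n \<rho> (dnf_eval F) y0 = EE n \<rho> (\<lambda>S. dnf_eval F (flip y0 S))"
    by (simp add: noise_op_def EE_def)
  also have "\<dots> \<le> EE n \<rho> (\<lambda>S. \<Sum>t\<in>F. if term_sat t (flip y0 S) then 1 else 0)"
  proof (rule EE_mono[OF r0 r1])
    fix S
    show "dnf_eval F (flip y0 S) \<le> (\<Sum>t\<in>F. if term_sat t (flip y0 S) then 1 else 0)"
    proof (cases "\<exists>t\<in>F. term_sat t (flip y0 S)")
      case True
      then obtain t where "t \<in> F" "term_sat t (flip y0 S)" by blast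
      then have "(if term_sat t (flip y0 S) then 1 else 0) \<le> (\<Sum>t\<in>F. if term_sat t (flip y0 S) then 1 else (0::real))"
        by (intro member_le_sum finF) auto
      then show ?thesis using True \<open>term_sat t (flip y0 S)\<close> by (simp add: dnf_eval_def)
    next
      case False
      then show ?thesis by (simp add: dnf_eval_def sum_nonneg)
    qed
  qed
  also have "\<dots> = (\<Sum>t\<in>F. EE n \<rho> (\<lambda>S. if term_sat t (flip y0 S) then 1 else 0))"
    by (rule EE_sum)
  also have "\<dots> = (\<Sum>t\<in>F. \<Prod>i<n. fac t i)"
  proof (rule sum.cong[OF refl])
    fix t assume t: "t \<in> F"
    have "EE n \<rho> (\<lambda>S. if term_sat t (flip y0 S) then 1 else 0)
        = EE n \<rho> (\<lambda>S. if \<forall>i<n. ok t i (i \<in> S) then 1 else 0)"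
    proof (rule EE_cong)
      fix S
      have "term_sat t (flip y0 S) = (\<forall>i<n. ok t i (i \<in> S))"
        using tF[OF t] unfolding term_sat_def ok_def flip_def by fastforce
      then show "(if term_sat t (flip y0 S) then 1 else 0) = (if \<forall>i<n. ok t i (i \<in> S) then 1 else (0::real))"
        by simp
    qed
    then show "EE n \<rho> (\<lambda>S. if term_sat t (flip y0 S) then 1 else 0) = (\<Prod>i<n. fac t i)"
      by (simp add: EE_prod fac_def)
  qed
  also have "\<dots> \<le> (\<Sum>t\<in>F. 1 / (20 * real k))"
  proof (rule sum_mono)
    fix t assume t: "t \<in> F"
    show "(\<Prod>i<n. fac t i) \<le> 1 / (20 * real k)"
    proof (cases "real (card t) \<le> L")
      case True
      then have "t \<in> sub_dnf F L" using t by (simp add: sub_dnf_def)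
      then have "\<not> term_sat t y0" using assms(3) unfolding L_def dnf_eval_def
        by (auto split: if_splits)
      then obtain i b where ib: "(i, b) \<in> t" "y0 i \<noteq> b" unfolding term_sat_def by auto
      then have "i < n" using tF[OF t] by auto
      have "(\<Prod>i<n. fac t i) \<le> fac t i"
        by (rule prod_one_factor[OF _ \<open>i < n\<close>]) (use fac01 in auto)
      also have "fac t i \<le> 1 - \<rho>"
        using ib r0 r1 by (auto simp: fac_def ok_def)
      also have "\<dots> \<le> 1 / (20 * real k)" using kp by (simp add: p field_simps)
      finally show ?thesis .
    next
      case False
      define V where "V = fst ` t"
      have Vn: "V \<subseteq> {..<n}" using tF[OF t] by (auto simp: V_def)
      have "(\<Prod>i<n. fac t i) \<le> \<rho> ^ card V"
      proof (rule prod_many_factors[OF _ Vn])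
        fix i assume "i \<in> V"
        then obtain b where "(i, b) \<in> t" by (auto simp: V_def)
        then have "\<not> (ok t i True \<and> ok t i False)" by (auto simp: ok_def)
        then show "fac t i \<le> \<rho>" using pr r0 r1 by (auto simp: fac_def)
      qed (use fac01 in auto)
      also have "\<dots> \<le> 1 / (20 * real k)"
      proof -
        have "t \<subseteq> V \<times> UNIV" by (force simp: V_def)
        moreover have "finite V" using Vn finite_subset by blast
        ultimately have "card t \<le> card (V \<times> (UNIV :: bool set))"
          by (intro card_mono) auto
        then have "card t \<le> 2 * card V" by (simp add: card_cartesian_product)
        then have "real (card V) \<ge> 500000 * real k * log 2 (real k)"
          using False unfolding L_def by linarith
        from numeric[OF assms(1) this] show ?thesis by (simp add: \<rho>_def)
      qed
      finally show ?thesis .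
    qed
  qed
  also have "\<dots> = real (card F) / (20 * real k)" by simp
  also have "\<dots> \<le> real k / (20 * real k)"
    using cardF kp by (intro divide_right_mono) auto
  also have "\<dots> \<le> 0.1" using kp by simp
  finally show ?thesis by (simp add: \<rho>_def)
qed

end
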